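(* Let $R\subseteq\mathbb N$ be sparse, $n\in\mathbb N^+$, $\mathbf A=(A_1,\dots,A_n)$ an $n$-tuple of operators on $R$ with $A_1\neq_R0$, and $\varepsilon>0$. Then there is $\Delta_0$ such that for all $\Delta\ge\Delta_0$ and all $z\in R^n_\Delta$, $$(1-\varepsilon)|A_1z_1|<|\mathbf A\cdot z|<(1+\varepsilon)|A_1z_1|.$$
   Context: Let $R\subseteq\mathbb N$ be infinite, enumerated increasingly as $(r_n)_{n\in\mathbb N}$; $\sigma:R\to R$ is the successor map $\sigma(r_n)=r_{n+1}$ and $\sigma^k$ its $k$-fold iterate ($\sigma^0=\mathrm{id}$). An operator on $R$ is a function $R\to\mathbb Z$, $z\mapsto a_m\sigma^m(z)+\dots+a_0\sigma^0(z)$ with $a_i\in\mathbb Z$. For an operator $A$: $A=_R0$ if $Az=0$ for all $z\in R$; $A>_R0$ (resp. $A<_R0$) if $Az>0$ (resp. $Az<0$) for all but finitely many $z\in R$; $A\ne_R0$ means not $A=_R0$. $R$ is sparse if every operator $A$ satisfies (S1) $A=_R0$ or $A>_R0$ or $A<_R0$; and (S2) if $A>_R0$ then there is $\Delta\in\mathbb N$ with $A(\sigma^\Delta z)>z$ for all $z\in R$. For an $n$-tuple of operators $\mathbf A$ and $z\in R^n$, $\mathbf A\cdot z=A_1z_1+\dots+A_nz_n$. For $\tilde R\subseteq R$ and $\Delta\in\mathbb N$, $\tilde R^n_\Delta=\{(z_1,\dots,z_n)\in\tilde R^n: z_i\ge\sigma^\Delta z_{i+1}\text{ for }1\le i\le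 n\}$ where $z_{n+1}:=\min\tilde R$. *)

theory Defs
  imports Complex_Main
begin

text \<open>Successor map on R: the least element of R strictly greater than z.
  For infinite R and z in R this is sigma(r_n) = r_(n+1).\<close>
definition rsucc :: "nat set \<Rightarrow> nat \<Rightarrow> nat" where
  "rsucc R z = (LEAST y. y \<in> R \<and> z < y)"

abbreviation rsig :: "nat set \<Rightarrow> nat \<Rightarrow> nat \<Rightarrow> nat" where
  "rsig R k \<equiv> rsucc R ^^ k"

text \<open>An operator a_m sigma^m + ... + a_0 sigma^0 is represented by its coefficient
  list [a_0, ..., a_m].\<close>
definition op_apply :: "nat set \<Rightarrow> int list \<Rightarrow> nat \<Rightarrow> int" where
  "op_apply R A z = (\<Sum>i<length A. A ! i * int (rsig R i z))"

definition op_zero :: "nat set \<Rightarrow> int list \<Rightarrow> bool" where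
  "op_zero R A \<longleftrightarrow> (\<forall>z\<in>R. op_apply R A z = 0)"

definition op_pos :: "nat set \<Rightarrow> int list \<Rightarrow> bool" where
  "op_pos R A \<longleftrightarrow> finite {z\<in>R. \<not> op_apply R A z > 0}"

definition op_neg :: "nat set \<Rightarrow> int list \<Rightarrow> bool" where
  "op_neg R A \<longleftrightarrow> finite {z\<in>R. \<not> op_apply R A z < 0}"

definition sparse :: "nat set \<Rightarrow> bool" where
  "sparse R \<longleftrightarrow> infinite R \<and>
     (\<forall>A. op_zero R A \<or> op_pos R A \<or> op_neg R A) \<and>
     (\<forall>A. op_pos R A \<longrightarrow> (\<exists>\<Delta>. \<forall>z\<in>R. op_apply R A (rsig R \<Delta> z) > int z))"

text \<open>R^n_Delta: tuples z_1..z_n (as a function on indices 1..n) in R with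
  z_i >= sigma^Delta z_(i+1), where z_(n+1) := min R.\<close>
definition tuples_Delta :: "nat set \<Rightarrow> nat \<Rightarrow> nat \<Rightarrow> (nat \<Rightarrow> nat) set" where
  "tuples_Delta R n \<Delta> = {z. (\<forall>i\<in>{1..n}. z i \<in> R) \<and>
      (\<forall>i\<in>{1..n}. z i \<ge> rsig R \<Delta> (if i = n then (LEAST x. x \<in> R) else z (Suc i)))}"

definition tuple_apply :: "nat set \<Rightarrow> nat \<Rightarrow> (nat \<Rightarrow> int list) \<Rightarrow> (nat \<Rightarrow> nat) \<Rightarrow> int" where
  "tuple_apply R n As z = (\<Sum>i=1..n. op_apply R (As i) (z i))"

end

theory Submission imports Defs "HOL-Library.Infinite_Set" begin

lemma rsucc_enum: "infinite R \<Longrightarrow> rsucc R (enumerate R k) = enumerate R (Suc k)"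
  by (simp add: rsucc_def enumerate_Suc'')

lemma rsig_enum: "infinite R \<Longrightarrow> rsig R j (enumerate R k) = enumerate R (k + j)"
  by (induction j) (auto simp: rsucc_enum)

lemma rsucc_gt: assumes "infinite R" shows "rsucc R x \<in> R \<and> x < rsucc R x"
proof -
  obtain y where "y \<in> R" "x < y" using assms by (meson finite_nat_set_iff_bounded_le not_le)
  then show ?thesis unfolding rsucc_def by (metis (mono_tags, lifting) LeastI_ex)
qed

lemma rsucc_mono: assumes "infinite R" "x \<le> y" shows "rsucc R x \<le> rsucc R y"
proof -
  have "rsucc R y \<in> R \<and> x < rsucc R y" using rsucc_gt[OF assms(1), of y] assms(2) by auto
  then show ?thesis unfolding rsucc_def by (simp add: Least_le)
qed

lemma rsig_mono: assumes "infinite R" "x \<le> y" shows "rsig R k x \<le> rsig R k y"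
  using assms by (induction k) (auto simp: rsucc_mono)

lemma rsig_ge: assumes "infinite R" shows "x \<le> rsig R k x"
  using assms by (induction k) (auto dest: rsucc_gt[of R] intro: order.trans less_imp_le)

lemma rsig_le: assumes "infinite R" "i \<le> j" shows "rsig R i x \<le> rsig R j x"
proof -
  have "rsig R j x = rsig R (j - i) (rsig R i x)" using assms(2)
    by (metis funpow_add le_add_diff_inverse2 o_apply)
  then show ?thesis using rsig_ge[OF assms(1)] by metis
qed

lemma rsig_in: assumes "infinite R" "x \<in> R" shows "rsig R k x \<in> R"
  using assms by (induction k) (auto dest: rsucc_gt[of R])

lemma op_apply_Nil[simp]: "op_apply R [] z = 0"
  by (simp add: op_apply_def)

lemma op_apply_Cons: "op_apply R (a # A) z = a * int z + op_apply R A (rsucc R z)"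
  unfolding op_apply_def length_Cons sum.lessThan_Suc_shift
  by (simp add: funpow_Suc_right del: funpow.simps)

fun ladd :: "int list \<Rightarrow> int list \<Rightarrow> int list" where
  "ladd [] ys = ys" | "ladd xs [] = xs" | "ladd (x#xs) (y#ys) = (x+y) # ladd xs ys"

lemma op_apply_ladd: "op_apply R (ladd A B) z = op_apply R A z + op_apply R B z"
  by (induction A B arbitrary: z rule: ladd.induct) (auto simp: op_apply_Cons distrib_right)

lemma op_apply_shift: "op_apply R (replicate K 0 @ A) z = op_apply R A (rsig R K z)"
  by (induction K arbitrary: z) (auto simp: op_apply_Cons funpow_Suc_right simp del: funpow.simps)

lemma op_apply_neg: "op_apply R (map uminus A) z = - op_apply R A z"
  unfolding op_apply_def by (simp add: sum_negf[symmetric])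

lemma op_apply_one: "op_apply R [c] z = c * int z"
  by (simp add: op_apply_Cons)

lemma growth:
  assumes sp: "sparse R" and P: "op_pos R P"
  shows "\<exists>K. \<forall>z\<in>R. op_apply R P (rsig R K z) > int M * int z"
proof (induction M)
  case 0
  from sp P obtain D where "\<forall>z\<in>R. op_apply R P (rsig R D z) > int z"
    unfolding sparse_def by blast
  then show ?case by (metis of_nat_0 mult_zero_left of_nat_0_le_iff order.strict_trans1)
next
  case (Suc M)
  then obtain K where K: "\<forall>z\<in>R. op_apply R P (rsig R K z) > int M * int z" by blast
  define Q where "Q = ladd (replicate K 0 @ P) [- int M]"
  have Qa: "op_apply R Q z = op_apply R P (rsig R K z) - int M * int z" for z
    unfolding Q_def op_apply_ladd op_apply_shift op_apply_one by simp
  have "op_pos R Q" proof -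
    have "{z\<in>R. \<not> op_apply R Q z > 0} = {}" using K Qa by auto
    thus ?thesis unfolding op_pos_def by (metis finite.emptyI)
  qed
  with sp obtain D where D: "\<forall>z\<in>R. op_apply R Q (rsig R D z) > int z"
    unfolding sparse_def by blast
  have inf: "infinite R" using sp sparse_def by blast
  have "\<forall>z\<in>R. op_apply R P (rsig R (K + D) z) > int (Suc M) * int z"
  proof
    fix z assume z: "z \<in> R"
    have e: "rsig R (K + D) z = rsig R K (rsig R D z)" by (simp add: funpow_add)
    have "z \<le> rsig R D z" using rsig_ge[OF inf] by blast
    hence "int M * int z \<le> int M * int (rsig R D z)" by (simp add: mult_left_mono)
    moreover have "op_apply R P (rsig R K (rsig R D z)) - int M * int (rsig R D z) > int z"
      using D z Qa by metis
    ultimately show "op_apply R P (rsig R (K + D) z) > int (Suc M) * int z"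
      unfolding e by (simp add: distrib_right)
  qed
  then show ?case by blast
qed

lemma op_bound:
  assumes inf: "infinite R" and len: "length A \<le> m"
  shows "\<bar>op_apply R A w\<bar> \<le> (\<Sum>j<length A. \<bar>A ! j\<bar>) * int (rsig R m w)"
proof -
  have "\<bar>op_apply R A w\<bar> \<le> (\<Sum>j<length A. \<bar>A ! j * int (rsig R j w)\<bar>)"
    unfolding op_apply_def by (rule sum_abs)
  also have "\<dots> \<le> (\<Sum>j<length A. \<bar>A ! j\<bar> * int (rsig R m w))"
  proof (rule sum_mono)
    fix j assume "j \<in> {..<length A}"
    hence "rsig R j w \<le> rsig R m w" using rsig_le[OF inf] len by simp
    thus "\<bar>A ! j * int (rsig R j w)\<bar> \<le> \<bar>A ! j\<bar> * int (rsig R m w)"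
      by (simp add: abs_mult mult_left_mono)
  qed
  also have "\<dots> = (\<Sum>j<length A. \<bar>A ! j\<bar>) * int (rsig R m w)"
    by (simp add: sum_distrib_right)
  finally show ?thesis .
qed

theorem mainTheorem4:
  fixes R :: "nat set" and n :: nat and As :: "nat \<Rightarrow> int list" and \<epsilon> :: real
  assumes "sparse R"
    and "n \<ge> 1"
    and "\<not> op_zero R (As 1)"
    and "\<epsilon> > 0"
  shows "\<exists>\<Delta>0. \<forall>\<Delta>\<ge>\<Delta>0. \<forall>z\<in>tuples_Delta R n \<Delta>.
     (1 - \<epsilon>) * \<bar>real_of_int (op_apply R (As 1) (z 1))\<bar> < \<bar>real_of_int (tuple_apply R n As z)\<bar>
   \<and> \<bar>real_of_int (tuple_apply R n As z)\<bar> < (1 + \<epsilon>) * \<bar>real_of_int (op_apply R (As 1) (z 1))\<bar>"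
proof -
  have sp: "sparse R" and n1: "n \<ge> 1" and eps: "\<epsilon> > 0" using assms by auto
  have inf: "infinite R" using sp sparse_def by blast
  obtain B where Bpos: "op_pos R B" and Ble: "\<And>w. op_apply R B w \<le> \<bar>op_apply R (As 1) w\<bar>"
  proof -
    have "op_pos R (As 1) \<or> op_neg R (As 1)" using sp assms(3) unfolding sparse_def by blast
    thus thesis
    proof
      assume "op_pos R (As 1)" thus thesis using that[of "As 1"] by simp
    next
      assume h: "op_neg R (As 1)"
      have "op_pos R (map uminus (As 1))" using h unfolding op_pos_def op_neg_def op_apply_neg by simp
      thus thesis using that[of "map uminus (As 1)"] by (simp add: op_apply_neg)
    qed
  qed
  define m where "m = (\<Sum>i\<in>{1..n}. length (As i))"
  define C where "C = (\<Sum>i\<in>{1..n}. \<Sum>j<length (As i). \<bar>As i ! j\<bar>)"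
  have bound: "\<bar>op_apply R (As i) w\<bar> \<le> C * int (rsig R m w)" if i: "i \<in> {1..n}" for i w
  proof -
    have "length (As i) \<le> m" unfolding m_def using i by (intro member_le_sum) auto
    hence "\<bar>op_apply R (As i) w\<bar> \<le> (\<Sum>j<length (As i). \<bar>As i ! j\<bar>) * int (rsig R m w)"
      by (rule op_bound[OF inf])
    also have "\<dots> \<le> C * int (rsig R m w)"
      unfolding C_def using i by (intro mult_right_mono member_le_sum) auto
    finally show ?thesis .
  qed
  have C0: "C \<ge> 0" unfolding C_def by (intro sum_nonneg) auto
  define M where "M = nat \<lceil>real_of_int C * real (n - 1) / \<epsilon>\<rceil>"
  have MC: "real_of_int C * real (n - 1) \<le> \<epsilon> * real M"
  proof -
    have "real_of_int C * real (n - 1) / \<epsilon> \<le> real M" unfolding M_def by linarith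
    thus ?thesis using eps by (simp add: divide_le_eq mult.commute)
  qed
  obtain K where K: "\<forall>w\<in>R. op_apply R B (rsig R K w) > int M * int w"
    using growth[OF sp Bpos] by blast
  define K' where "K' = K + m"
  have K': "op_apply R B (rsig R K' w) > int M * int (rsig R m w)" if "w \<in> R" for w
  proof -
    have "rsig R K' w = rsig R K (rsig R m w)" unfolding K'_def by (simp add: funpow_add)
    thus ?thesis using K rsig_in[OF inf that] by simp
  qed
  show ?thesis
  proof (intro exI allI impI ballI)
    fix \<Delta> z assume D: "\<Delta> \<ge> K'" and z: "z \<in> tuples_Delta R n \<Delta>"
    have zR: "\<And>i. i \<in> {1..n} \<Longrightarrow> z i \<in> R" using z unfolding tuples_Delta_def by blast
    have zc: "\<And>i. i \<in> {1..n} \<Longrightarrow> z i \<ge> rsig R \<Delta> (if i = n then (LEAST x. x \<in> R) else z (Suc i))"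
      using z unfolding tuples_Delta_def by blast
    define nxt where "nxt = (if 1 = n then (LEAST x. x \<in> R) else z 2)"
    have Rne: "(LEAST x. x \<in> R) \<in> R" using inf by (metis LeastI finite.emptyI ex_in_conv)
    have nxtR: "nxt \<in> R" unfolding nxt_def using Rne zR n1 by auto
    have z1R: "z 1 \<in> R" using zR n1 by auto
    have z1: "z 1 \<ge> rsig R \<Delta> nxt" using zc[of 1] n1 unfolding nxt_def by (cases "n = 1") (auto simp: numeral_2_eq_2)
    define a where "a = op_apply R (As 1) (z 1)"
    have abig: "\<bar>a\<bar> > int M * int (rsig R m nxt)"
    proof -
      obtain k1 where k1: "enumerate R k1 = z 1" using enumerate_Ex[OF inf z1R] by blast
      obtain k2 where k2: "enumerate R k2 = nxt" using enumerate_Ex[OF inf nxtR] by blast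
      have "enumerate R (k2 + \<Delta>) \<le> enumerate R k1" using z1 k1 k2 rsig_enum[OF inf] by metis
      hence kk: "k2 + \<Delta> \<le> k1" using inf by simp
      define w where "w = enumerate R (k1 - K')"
      have wR: "w \<in> R" unfolding w_def using enumerate_in_set[OF inf] by blast
      have zw: "rsig R K' w = z 1" unfolding w_def rsig_enum[OF inf] using kk D k1 by simp
      have wn: "nxt \<le> w" unfolding w_def using kk D k2[symmetric] enumerate_mono_le_iff[OF inf, of k2 "k1 - K'"] by simp
      have "int M * int (rsig R m nxt) \<le> int M * int (rsig R m w)"
        using rsig_mono[OF inf wn] by (simp add: mult_left_mono)
      also have "\<dots> < op_apply R B (z 1)" using K'[OF wR] zw by simp
      also have "\<dots> \<le> \<bar>a\<bar>" unfolding a_def by (rule Ble)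
      finally show ?thesis .
    qed
    define s where "s = (\<Sum>i=2..n. op_apply R (As i) (z i))"
    have ta: "tuple_apply R n As z = a + s"
      unfolding tuple_apply_def a_def s_def using n1 by (simp add: sum.atLeast_Suc_atMost numeral_2_eq_2)
    have chain: "\<forall>d. 2 + d \<le> n \<longrightarrow> z (2 + d) \<le> z 2"
    proof
      fix d show "2 + d \<le> n \<longrightarrow> z (2 + d) \<le> z 2"
      proof (induction d)
        case (Suc d)
        show ?case
        proof
          assume h: "2 + Suc d \<le> n"
          have "z (Suc (2 + d)) \<le> rsig R \<Delta> (z (Suc (2 + d)))" by (rule rsig_ge[OF inf])
          also have "\<dots> \<le> z (2 + d)" using zc[of "2 + d"] h by simp
          finally show "z (2 + Suc d) \<le> z 2" using Suc h by simp
        qed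
      qed simp
    qed
    have sbound: "\<bar>s\<bar> \<le> int (n - 1) * (C * int (rsig R m nxt))"
    proof -
      have "\<bar>s\<bar> \<le> (\<Sum>i=2..n. \<bar>op_apply R (As i) (z i)\<bar>)" unfolding s_def by (rule sum_abs)
      also have "\<dots> \<le> (\<Sum>i=2..n. C * int (rsig R m nxt))"
      proof (rule sum_mono)
        fix i assume i: "i \<in> {2..n}"
        hence "1 \<noteq> n" by auto
        hence nx: "nxt = z 2" unfolding nxt_def by simp
        have eq: "2 + (i - 2) = i" using i by auto
        have h: "2 + (i - 2) \<le> n" using i by auto
        have "z (2 + (i - 2)) \<le> z 2" using chain h by blast
        hence "z i \<le> z 2" by (simp only: eq)
        hence "rsig R m (z i) \<le> rsig R m nxt" using nx rsig_mono[OF inf] by simp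
        hence "C * int (rsig R m (z i)) \<le> C * int (rsig R m nxt)" using C0 by (simp add: mult_left_mono)
        moreover have "\<bar>op_apply R (As i) (z i)\<bar> \<le> C * int (rsig R m (z i))" using bound i by simp
        ultimately show "\<bar>op_apply R (As i) (z i)\<bar> \<le> C * int (rsig R m nxt)" by linarith
      qed
      also have "\<dots> = int (n - 1) * (C * int (rsig R m nxt))" using n1 by simp
      finally show ?thesis .
    qed
    have key: "\<bar>real_of_int s\<bar> < \<epsilon> * \<bar>real_of_int a\<bar>"
    proof -
      define t where "t = real (rsig R m nxt)"
      have t0: "t \<ge> 0" unfolding t_def by simp
      have "\<bar>real_of_int s\<bar> \<le> real (n - 1) * (real_of_int C * t)"
      proof -
        have "real_of_int \<bar>s\<bar> \<le> real_of_int (int (n - 1) * (C * int (rsig R m nxt)))"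
          using sbound by (simp only: of_int_le_iff)
        thus ?thesis unfolding t_def by simp
      qed
      also have "\<dots> = (real_of_int C * real (n - 1)) * t" by simp
      also have "\<dots> \<le> (\<epsilon> * real M) * t" using MC t0 by (rule mult_right_mono)
      also have "\<dots> = \<epsilon> * (real M * t)" by simp
      also have "\<dots> < \<epsilon> * \<bar>real_of_int a\<bar>"
      proof -
        have "real_of_int (int M * int (rsig R m nxt)) < real_of_int \<bar>a\<bar>"
          using abig by (simp only: of_int_less_iff)
        hence "real M * t < \<bar>real_of_int a\<bar>" unfolding t_def by simp
        thus ?thesis using eps by simp
      qed
      finally show ?thesis .
    qed
    have "real_of_int (tuple_apply R n As z) = real_of_int a + real_of_int s" using ta by simp
    thus "(1 - \<epsilon>) * \<bar>real_of_int (op_apply R (As 1) (z 1))\<bar> < \<bar>real_of_int (tuple_apply R n As z)\<bar>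
   \<and> \<bar>real_of_int (tuple_apply R n As z)\<bar> < (1 + \<epsilon>) * \<bar>real_of_int (op_apply R (As 1) (z 1))\<bar>"
    proof -
      have t1: "\<bar>real_of_int a + real_of_int s\<bar> \<le> \<bar>real_of_int a\<bar> + \<bar>real_of_int s\<bar>" by (rule abs_triangle_ineq)
      have t2: "\<bar>real_of_int a\<bar> - \<bar>real_of_int s\<bar> \<le> \<bar>real_of_int a + real_of_int s\<bar>" by (smt (verit))
      show ?thesis unfolding a_def[symmetric] \<open>real_of_int (tuple_apply R n As z) = real_of_int a + real_of_int s\<close>
        using key t1 t2 by (simp add: algebra_simps)
    qed
  qed
qed

end
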